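(* For every integer $V\geq 3$ with $V\equiv 1$ or $3\pmod 6$, there exists an equiangular tight frame of $N$ vectors in $\mathbb{C}^M$ with \[ M=\tfrac{1}{6}(V+2)(V+3),\qquad N=\tfrac{1}{2}(V+1)(V+2). \]
   Context: An equiangular tight frame (ETF) of $N$ vectors in $\mathbb{C}^M$ is a sequence $\{\phi_i\}_{i=1}^N$ of nonzero vectors of equal norm such that $|\langle\phi_i,\phi_j\rangle|$ is the same for all $i\neq j$ and $\sum_i\phi_i\phi_i^*$ is a scalar multiple of the identity on $\mathbb{C}^M$. *)

theory Defs
  imports Complex_Main
begin

text \<open>Vectors in C^M are represented as functions nat => complex, where only the
components with index k < M are relevant. A sequence of N vectors is a function
phi :: nat => nat => complex, phi i being the i-th vector (i < N).\<close>

definition cinner :: "nat \<Rightarrow> (nat \<Rightarrow> complex) \<Rightarrow> (nat \<Rightarrow> complex) \<Rightarrow> complex" where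
  "cinner M u v = (\<Sum>k<M. u k * cnj (v k))"

definition is_ETF :: "nat \<Rightarrow> nat \<Rightarrow> (nat \<Rightarrow> nat \<Rightarrow> complex) \<Rightarrow> bool" where
  "is_ETF M N phi \<longleftrightarrow>
     (\<forall>i<N. \<exists>k<M. phi i k \<noteq> 0) \<and>
     (\<forall>i<N. \<forall>j<N. cinner M (phi i) (phi i) = cinner M (phi j) (phi j)) \<and>
     (\<exists>c. \<forall>i<N. \<forall>j<N. i \<noteq> j \<longrightarrow> cmod (cinner M (phi i) (phi j)) = c) \<and>
     (\<exists>A::complex. \<forall>k<M. \<forall>l<M.
        (\<Sum>i<N. phi i k * cnj (phi i l)) = (if k = l then A else 0))"

end

theory Submission
  imports Defs "HOL-Number_Theory.Cong"
begin


definition F :: "nat \<Rightarrow> nat \<Rightarrow> nat \<Rightarrow> complex" where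
  "F n a b = cis (2 * pi * real a * real b / real n)"

lemma F_norm [simp]: "norm (F n a b) = 1" by (simp add: F_def)
lemma F_0 [simp]: "F n 0 b = 1" by (simp add: F_def)
lemma F_sym: "F n a b = F n b a" by (simp add: F_def mult_ac)

lemma F_cnj_self [simp]: "F n a b * cnj (F n a b) = 1"
  unfolding F_def cis_cnj cis_mult by simp

lemma F_mult: "F n a b * cnj (F n a' b) = (cis (2*pi*(real a - real a')/n)) ^ b"
  by (simp add: F_def cis_cnj cis_mult DeMoivre algebra_simps add_divide_distrib diff_divide_distrib)

lemma F_orth:
  assumes "n > 0" "a < n" "a' < n"
  shows "(\<Sum>b<n. F n a b * cnj (F n a' b)) = (if a = a' then of_nat n else 0)"
proof (cases "a = a'")
  case True
  then show ?thesis using True by simp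
next
  case False
  define z where "z = cis (2*pi*(real a - real a')/n)"
  have zdiv: "z = cis (2*pi*real a/n) / cis (2*pi*real a'/n)"
    by (simp add: z_def cis_divide diff_divide_distrib algebra_simps)
  have inj: "inj_on (\<lambda>k. cis (2 * pi * real k / real n)) {..<n}"
    using bij_betw_roots_unity[OF assms(1)] by (simp add: bij_betw_def)
  have "cis (2*pi*real a/n) \<noteq> cis (2*pi*real a'/n)"
    using inj_onD[OF inj, of a a'] assms False by auto
  hence z1: "z \<noteq> 1" unfolding zdiv by (simp only: divide_eq_1_iff) simp
  have "z ^ n = cis (real n * (2*pi*(real a - real a')/n))" by (simp add: z_def DeMoivre)
  also have "\<dots> = cis (2 * pi * real_of_int (int a - int a'))" using assms by simp
  also have "\<dots> = 1" by (rule cis_multiple_2pi) simp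
  finally have zn: "z ^ n = 1" .
  have "(\<Sum>b<n. F n a b * cnj (F n a' b)) = (\<Sum>b<n. z ^ b)"
    by (simp add: F_mult z_def)
  also have "\<dots> = 0" using geometric_sum[OF z1, of n] zn by simp
  finally show ?thesis using False by simp
qed

lemma ETF_transfer:
  fixes psi :: "'y \<Rightarrow> 'x \<Rightarrow> complex"
  assumes fin: "finite X" "finite Y" and cards: "card X = M" "card Y = N"
    and nz: "\<forall>y\<in>Y. \<exists>x\<in>X. psi y x \<noteq> 0"
    and nrm: "\<forall>y\<in>Y. (\<Sum>x\<in>X. psi y x * cnj (psi y x)) = c0"
    and crs: "\<forall>y\<in>Y. \<forall>y'\<in>Y. y \<noteq> y' \<longrightarrow> cmod (\<Sum>x\<in>X. psi y x * cnj (psi y' x)) = c"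
    and frm: "\<forall>x\<in>X. \<forall>x'\<in>X. (\<Sum>y\<in>Y. psi y x * cnj (psi y x')) = (if x = x' then A else 0)"
  shows "\<exists>phi. is_ETF M N phi"
proof -
  obtain g where g: "bij_betw g {0..<M} X" using ex_bij_betw_nat_finite[OF fin(1)] cards by auto
  obtain h where h: "bij_betw h {0..<N} Y" using ex_bij_betw_nat_finite[OF fin(2)] cards by auto
  define phi where "phi i k = psi (h i) (g k)" for i k
  have ci: "cinner M (phi i) (phi j) = (\<Sum>x\<in>X. psi (h i) x * cnj (psi (h j) x))" for i j
    unfolding cinner_def phi_def lessThan_atLeast0
    by (rule sum.reindex_bij_betw[OF g, of "\<lambda>x. psi (h i) x * cnj (psi (h j) x)"])
  have cf: "(\<Sum>i<N. phi i k * cnj (phi i l)) = (\<Sum>y\<in>Y. psi y (g k) * cnj (psi y (g l)))" for k l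
    unfolding phi_def lessThan_atLeast0
    by (rule sum.reindex_bij_betw[OF h, of "\<lambda>y. psi y (g k) * cnj (psi y (g l))"])
  have hY: "i < N \<Longrightarrow> h i \<in> Y" for i using h by (auto simp: bij_betw_def)
  have gX: "k < M \<Longrightarrow> g k \<in> X" for k using g by (auto simp: bij_betw_def)
  have hinj: "i < N \<Longrightarrow> j < N \<Longrightarrow> h i = h j \<Longrightarrow> i = j" for i j
    using h by (auto simp: bij_betw_def inj_on_def)
  have ginj: "k < M \<Longrightarrow> l < M \<Longrightarrow> g k = g l \<longleftrightarrow> k = l" for k l
    using g by (auto simp: bij_betw_def inj_on_def)
  have "\<forall>i<N. \<exists>k<M. phi i k \<noteq> 0"
  proof (intro allI impI)
    fix i assume "i < N"
    then obtain x where x: "x \<in> X" "psi (h i) x \<noteq> 0" using nz hY by blast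
    then obtain k where "k < M" "g k = x" using g by (auto simp: bij_betw_def)
    thus "\<exists>k<M. phi i k \<noteq> 0" using x by (auto simp: phi_def)
  qed
  moreover have "\<forall>i<N. \<forall>j<N. cinner M (phi i) (phi i) = cinner M (phi j) (phi j)"
    using nrm hY by (simp add: ci)
  moreover have "\<forall>i<N. \<forall>j<N. i \<noteq> j \<longrightarrow> cmod (cinner M (phi i) (phi j)) = c"
    using crs hY hinj by (metis ci)
  moreover have "\<forall>k<M. \<forall>l<M. (\<Sum>i<N. phi i k * cnj (phi i l)) = (if k = l then A else 0)"
    using frm gX ginj by (simp add: cf)
  ultimately show ?thesis unfolding is_ETF_def by blast
qed


lemma card_offdiag: "finite A \<Longrightarrow> card {(x,y). x\<in>A \<and> y\<in>A \<and> x \<noteq> y} = card A * card A - card A"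
proof -
  assume f: "finite A"
  have e: "{(x,y). x\<in>A \<and> y\<in>A \<and> x \<noteq> y} = A \<times> A - (\<lambda>x. (x,x)) ` A" by auto
  have "card ((\<lambda>x. (x,x)) ` A) = card A" by (rule card_image) (auto simp: inj_on_def)
  moreover have "(\<lambda>x. (x,x)) ` A \<subseteq> A \<times> A" by auto
  ultimately show ?thesis unfolding e using f by (simp add: card_Diff_subset card_cartesian_product)
qed

locale steiner =
  fixes S :: "'a set" and t :: "'a \<Rightarrow> 'a \<Rightarrow> 'a"
  assumes finS: "finite S"
    and tS: "\<lbrakk>x \<in> S; y \<in> S; x \<noteq> y\<rbrakk> \<Longrightarrow> t x y \<in> S"
    and tne: "\<lbrakk>x \<in> S; y \<in> S; x \<noteq> y\<rbrakk> \<Longrightarrow> t x y \<noteq> x"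
    and tcom: "\<lbrakk>x \<in> S; y \<in> S; x \<noteq> y\<rbrakk> \<Longrightarrow> t x y = t y x"
    and tinv: "\<lbrakk>x \<in> S; y \<in> S; x \<noteq> y\<rbrakk> \<Longrightarrow> t x (t x y) = y"
begin

definition blk where "blk x y = {x, y, t x y}"
definition Bl where "Bl = {blk x y | x y. x \<in> S \<and> y \<in> S \<and> x \<noteq> y}"
definition Bp where "Bp p = {B \<in> Bl. p \<in> B}"

lemma tne2: "\<lbrakk>x \<in> S; y \<in> S; x \<noteq> y\<rbrakk> \<Longrightarrow> t x y \<noteq> y"
  using tne[of y x] tcom by auto

lemma tinv2: "\<lbrakk>x \<in> S; y \<in> S; x \<noteq> y\<rbrakk> \<Longrightarrow> t y (t x y) = x"
  using tinv[of y x] tcom by auto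

lemma blk_eq:
  assumes "x \<in> S" "y \<in> S" "x \<noteq> y" "a \<in> blk x y" "b \<in> blk x y" "a \<noteq> b"
  shows "blk a b = blk x y"
proof -
  have z: "t x y \<in> S" "t x y \<noteq> x" "t x y \<noteq> y" using assms tS tne tne2 by auto
  have 1: "t x (t x y) = y" "t y (t x y) = x" using assms tinv tinv2 by auto
  have 2: "t (t x y) x = y" "t (t x y) y = x" using 1 z assms tcom by (metis)+
  have 3: "t y x = t x y" using assms tcom by auto
  show ?thesis using assms 1 2 3 unfolding blk_def by auto
qed

lemma finBl: "finite Bl"
proof -
  have "Bl \<subseteq> Pow S" unfolding Bl_def blk_def using tS by auto
  thus ?thesis using finS finite_subset by blast
qed

lemma Bl_sub: "B \<in> Bl \<Longrightarrow> B \<subseteq> S"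
  unfolding Bl_def blk_def using tS by auto

lemma Bl_card: "B \<in> Bl \<Longrightarrow> card B = 3"
proof -
  assume "B \<in> Bl"
  then obtain x y where "B = blk x y" "x \<in> S" "y \<in> S" "x \<noteq> y" unfolding Bl_def by blast
  moreover have "t x y \<noteq> x" "t x y \<noteq> y" using calculation tne tne2 by auto
  ultimately show ?thesis unfolding blk_def by simp
qed

lemma Bl_eq: "\<lbrakk>B \<in> Bl; a \<in> B; b \<in> B; a \<noteq> b\<rbrakk> \<Longrightarrow> B = blk a b"
  unfolding Bl_def using blk_eq by blast

lemma blk_in: "\<lbrakk>x \<in> S; y \<in> S; x \<noteq> y\<rbrakk> \<Longrightarrow> blk x y \<in> Bl"
  unfolding Bl_def by blast

lemma two_blocks: "\<lbrakk>p \<in> S; q \<in> S; p \<noteq> q\<rbrakk> \<Longrightarrow> {B \<in> Bl. p \<in> B \<and> q \<in> B} = {blk p q}"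
  using Bl_eq blk_in unfolding blk_def by auto

lemma Bp_card: assumes "p \<in> S" shows "2 * card (Bp p) = card S - 1"
proof -
  have e: "S - {p} = (\<Union>B\<in>Bp p. B - {p})"
  proof
    show "S - {p} \<subseteq> (\<Union>B\<in>Bp p. B - {p})"
    proof
      fix q assume q: "q \<in> S - {p}"
      hence "blk p q \<in> Bp p" using assms blk_in unfolding Bp_def blk_def by auto
      moreover have "q \<in> blk p q - {p}" using q unfolding blk_def by auto
      ultimately show "q \<in> (\<Union>B\<in>Bp p. B - {p})" by blast
    qed
  next
    show "(\<Union>B\<in>Bp p. B - {p}) \<subseteq> S - {p}" using Bl_sub unfolding Bp_def by auto
  qed
  have "card (S - {p}) = (\<Sum>B\<in>Bp p. card (B - {p}))"
    unfolding e
  proof (rule card_UN_disjoint)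
    show "finite (Bp p)" using finBl unfolding Bp_def by auto
    show "\<forall>B\<in>Bp p. finite (B - {p})" using Bl_sub finS finite_subset unfolding Bp_def by blast
    show "\<forall>B\<in>Bp p. \<forall>B'\<in>Bp p. B \<noteq> B' \<longrightarrow> (B - {p}) \<inter> (B' - {p}) = {}"
      unfolding Bp_def using Bl_eq by blast
  qed
  also have "\<dots> = (\<Sum>B\<in>Bp p. 2)"
    by (rule sum.cong) (auto simp: Bp_def Bl_card)
  finally show ?thesis using assms finS by simp
qed

lemma Bl_count: "6 * card Bl = card S * card S - card S"
proof -
  let ?P = "\<lambda>A. {(x,y). x\<in>A \<and> y\<in>A \<and> x \<noteq> y}"
  have e: "?P S = (\<Union>B\<in>Bl. ?P B)"
  proof
    show "?P S \<subseteq> (\<Union>B\<in>Bl. ?P B)"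
    proof
      fix z assume "z \<in> ?P S"
      then obtain x y where z: "z = (x,y)" "x \<in> S" "y \<in> S" "x \<noteq> y" by auto
      hence "blk x y \<in> Bl" "z \<in> ?P (blk x y)" using blk_in unfolding blk_def by auto
      thus "z \<in> (\<Union>B\<in>Bl. ?P B)" by blast
    qed
  next
    show "(\<Union>B\<in>Bl. ?P B) \<subseteq> ?P S" using Bl_sub by blast
  qed
  have "card (?P S) = (\<Sum>B\<in>Bl. card (?P B))"
    unfolding e
  proof (rule card_UN_disjoint)
    show "finite Bl" by (rule finBl)
    show "\<forall>B\<in>Bl. finite (?P B)"
    proof
      fix B assume "B \<in> Bl"
      hence "?P B \<subseteq> B \<times> B" "finite B" using Bl_sub finS by (auto intro: finite_subset)
      thus "finite (?P B)" using finite_subset by blast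
    qed
    show "\<forall>B\<in>Bl. \<forall>B'\<in>Bl. B \<noteq> B' \<longrightarrow> ?P B \<inter> ?P B' = {}"
      using Bl_eq by blast
  qed
  also have "\<dots> = (\<Sum>B\<in>Bl. 6)"
  proof (rule sum.cong)
    fix B assume "B \<in> Bl"
    hence "finite B" "card B = 3" using Bl_sub finS Bl_card by (auto intro: finite_subset)
    thus "card (?P B) = 6" using card_offdiag[of B] by simp
  qed simp
  finally show ?thesis using card_offdiag[OF finS] by simp
qed

end


definition nx :: "nat \<Rightarrow> nat" where "nx i = (if i = 2 then 0 else i + 1)"
definition pv :: "nat \<Rightarrow> nat" where "pv i = (if i = 0 then 2 else i - 1)"

locale idem_q =
  fixes Q :: "nat set" and op sol :: "nat \<Rightarrow> nat \<Rightarrow> nat"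
  assumes finQ: "finite Q"
    and opQ: "x \<in> Q \<Longrightarrow> y \<in> Q \<Longrightarrow> op x y \<in> Q"
    and solQ: "x \<in> Q \<Longrightarrow> y \<in> Q \<Longrightarrow> sol x y \<in> Q"
    and comm: "x \<in> Q \<Longrightarrow> y \<in> Q \<Longrightarrow> op x y = op y x"
    and op_sol: "x \<in> Q \<Longrightarrow> w \<in> Q \<Longrightarrow> op x (sol x w) = w"
    and sol_op: "x \<in> Q \<Longrightarrow> y \<in> Q \<Longrightarrow> sol x (op x y) = y"
    and idem: "x \<in> Q \<Longrightarrow> op x x = x"
begin

lemma key: "x \<in> Q \<Longrightarrow> y \<in> Q \<Longrightarrow> w \<in> Q \<Longrightarrow> sol x w = y \<longleftrightarrow> op x y = w"
  using op_sol sol_op by metis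

lemma op_eq_self: "x \<in> Q \<Longrightarrow> y \<in> Q \<Longrightarrow> op x y = x \<longleftrightarrow> y = x"
  using key[of x y x] key[of x x x] idem by metis

lemma sol_eq_self: "x \<in> Q \<Longrightarrow> w \<in> Q \<Longrightarrow> sol x w = x \<longleftrightarrow> w = x"
  using key[of x x w] idem by metis

lemma op_eq_self': "x \<in> Q \<Longrightarrow> y \<in> Q \<Longrightarrow> x = op x y \<longleftrightarrow> y = x"
  using op_eq_self by metis
lemma sol_eq_self': "x \<in> Q \<Longrightarrow> w \<in> Q \<Longrightarrow> x = sol x w \<longleftrightarrow> w = x"
  using sol_eq_self by metis
lemma sol_sol: "x \<in> Q \<Longrightarrow> y \<in> Q \<Longrightarrow> sol (sol y x) x = y"
  by (metis comm op_sol sol_op solQ)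

lemma sol_fix: "x \<in> Q \<Longrightarrow> y \<in> Q \<Longrightarrow> sol y x = x \<longleftrightarrow> y = x"
  by (metis comm op_sol op_eq_self sol_eq_self)
lemma sol_fix': "x \<in> Q \<Longrightarrow> y \<in> Q \<Longrightarrow> x = sol y x \<longleftrightarrow> y = x"
  using sol_fix by metis

definition tb :: "nat \<times> nat \<Rightarrow> nat \<times> nat \<Rightarrow> nat \<times> nat" where
  "tb a b = (let (x,i) = a; (y,j) = b in
     if i = j then (op x y, nx i)
     else if x = y then (x, 3 - i - j)
     else if j = nx i then (sol x y, i)
     else (sol y x, j))"

lemma bose_props:
  assumes a: "a \<in> Q \<times> {0::nat,1,2}" and b: "b \<in> Q \<times> {0::nat,1,2}" and ne: "a \<noteq> b"
  shows "tb a b \<in> Q \<times> {0::nat,1,2}" "tb a b \<noteq> a" "tb a b = tb b a" "tb a (tb a b) = b"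
proof -
  obtain x i y j where ab: "a = (x,i)" "b = (y,j)" by fastforce
  have x: "x \<in> Q" and y: "y \<in> Q" and i: "i \<in> {0,1,2}" and j: "j \<in> {0,1,2}" using a b ab by auto
  show "tb a b \<in> Q \<times> {0::nat,1,2}"
    using i j x y ne unfolding ab tb_def nx_def by (auto simp: opQ solQ)
  show "tb a b \<noteq> a"
    using i j x y ne unfolding ab tb_def nx_def by (auto simp: opQ solQ op_eq_self sol_eq_self op_eq_self' sol_eq_self' sol_fix sol_fix')
  show "tb a b = tb b a"
    using i j x y ne unfolding ab tb_def nx_def by (auto simp: comm)
  show "tb a (tb a b) = b"
    using i j x y ne unfolding ab tb_def nx_def by (auto simp: opQ solQ op_eq_self sol_eq_self op_eq_self' sol_eq_self' op_sol sol_op sol_sol sol_fix sol_fix')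
qed

lemma steiner_bose: "steiner (Q \<times> {0::nat,1,2}) tb"
  by (unfold_locales) (use finQ bose_props in auto)

end


definition addm :: "nat \<Rightarrow> nat \<Rightarrow> nat \<Rightarrow> nat" where "addm m x y = (if x + y < m then x + y else x + y - m)"
definition subm :: "nat \<Rightarrow> nat \<Rightarrow> nat \<Rightarrow> nat" where "subm m x y = (if y \<le> x then x - y else x + m - y)"
definition hb :: "nat \<Rightarrow> nat \<Rightarrow> nat" where "hb m s = (if even s then s div 2 else (s + m) div 2)"
definition opB where "opB m x y = hb m (addm m x y)"
definition solB where "solB m x w = subm m (addm m w w) x"

lemma addm_prop: "x < (m::nat) \<Longrightarrow> y < m \<Longrightarrow> addm m x y < m \<and> (addm m x y = x + y \<or> addm m x y + m = x + y)"
  unfolding addm_def by auto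
lemma subm_prop: "x < (m::nat) \<Longrightarrow> y < m \<Longrightarrow> subm m x y < m \<and> (subm m x y + y = x \<or> subm m x y + y = x + m)"
  unfolding subm_def by auto
lemma hb_prop: "odd (m::nat) \<Longrightarrow> s < m \<Longrightarrow> hb m s < m \<and> (2 * hb m s = s \<or> 2 * hb m s = s + m)"
  unfolding hb_def by (cases "even s") (auto elim!: evenE oddE)

lemma cs: "(b::nat) = c \<or> b + m = c \<or> c + m = b \<Longrightarrow> [b = c] (mod m)"
  unfolding cong_def by auto

lemma half_cancel: "odd (m::nat) \<Longrightarrow> h < m \<Longrightarrow> y < m \<Longrightarrow> [2 * h = 2 * y] (mod m) \<Longrightarrow> h = y"
  using cong_mult_lcancel_nat[of 2 m h y] cong_less_modulus_unique_nat[of h y m] by simp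

lemma bose_q: assumes m: "odd (m::nat)" shows "idem_q {..<m} (opB m) (solB m)"
proof
  show "finite {..<m}" by simp
  fix x y assume "x \<in> {..<m}" "y \<in> {..<m}"
  hence x: "x < m" and y: "y < m" by auto
  have a: "addm m x y < m \<and> (addm m x y = x + y \<or> addm m x y + m = x + y)" using addm_prop x y .
  have a': "addm m y x = addm m x y" unfolding addm_def by (simp add: add.commute)
  have h: "hb m (addm m x y) < m \<and> (2 * hb m (addm m x y) = addm m x y \<or> 2 * hb m (addm m x y) = addm m x y + m)"
    using hb_prop m a by blast
  show "opB m x y \<in> {..<m}" using h by (simp add: opB_def)
  show "opB m x y = opB m y x" using a' by (simp add: opB_def)
  have d: "addm m y y < m \<and> (addm m y y = y + y \<or> addm m y y + m = y + y)" using addm_prop y y .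
  have s: "subm m (addm m y y) x < m \<and> (subm m (addm m y y) x + x = addm m y y \<or> subm m (addm m y y) x + x = addm m y y + m)"
    using subm_prop d x by blast
  show "solB m x y \<in> {..<m}" using s by (simp add: solB_def)
  define z where "z = subm m (addm m y y) x"
  have a2: "addm m x z < m \<and> (addm m x z = x + z \<or> addm m x z + m = x + z)" using addm_prop x s z_def by blast
  have h2: "hb m (addm m x z) < m \<and> (2 * hb m (addm m x z) = addm m x z \<or> 2 * hb m (addm m x z) = addm m x z + m)"
    using hb_prop m a2 by blast
  have c1: "[2 * hb m (addm m x z) = addm m x z] (mod m)" by (rule cs) (use h2 in auto)
  have c2: "[addm m x z = z + x] (mod m)" by (rule cs) (use a2 in \<open>auto simp: add.commute\<close>)
  have c3: "[z + x = addm m y y] (mod m)" by (rule cs) (use s z_def in auto)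
  have c4: "[addm m y y = 2 * y] (mod m)" using d cs by (simp add: mult_2)
  have "[2 * hb m (addm m x z) = 2 * y] (mod m)" using c1 c2 c3 c4 by (meson cong_trans)
  thus "opB m x (solB m x y) = y"
    unfolding opB_def solB_def z_def[symmetric] using half_cancel m h2 y by blast
  define u where "u = hb m (addm m x y)"
  have d2: "addm m u u < m \<and> (addm m u u = u + u \<or> addm m u u + m = u + u)" using addm_prop h u_def by blast
  have s2: "subm m (addm m u u) x < m \<and> (subm m (addm m u u) x + x = addm m u u \<or> subm m (addm m u u) x + x = addm m u u + m)"
    using subm_prop d2 x by blast
  have e1: "[subm m (addm m u u) x + x = addm m u u] (mod m)" by (rule cs) (use s2 in auto)
  have e2: "[addm m u u = 2 * u] (mod m)" using d2 cs by (simp add: mult_2)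
  have e3: "[2 * u = addm m x y] (mod m)" by (rule cs) (use h u_def in auto)
  have e4: "[addm m x y = y + x] (mod m)" by (rule cs) (use a in \<open>auto simp: add.commute\<close>)
  have "[subm m (addm m u u) x + x = y + x] (mod m)" using e1 e2 e3 e4 by (meson cong_trans)
  hence "[subm m (addm m u u) x = y] (mod m)" by (simp add: cong_add_rcancel_nat)
  thus "solB m x (opB m x y) = y"
    unfolding opB_def solB_def u_def[symmetric] using cong_less_modulus_unique_nat s2 y by blast
next
  fix x assume "x \<in> {..<m}"
  hence x: "x < m" by simp
  have a: "addm m x x < m \<and> (addm m x x = x + x \<or> addm m x x + m = x + x)" using addm_prop x x .
  have h: "hb m (addm m x x) < m \<and> (2 * hb m (addm m x x) = addm m x x \<or> 2 * hb m (addm m x x) = addm m x x + m)"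
    using hb_prop m a by blast
  have "[2 * hb m (addm m x x) = addm m x x] (mod m)" by (rule cs) (use h in auto)
  moreover have "[addm m x x = 2 * x] (mod m)" using a cs by (simp add: mult_2)
  ultimately have "[2 * hb m (addm m x x) = 2 * x] (mod m)" by (rule cong_trans)
  thus "opB m x x = x" unfolding opB_def using half_cancel m h x by blast
qed



definition dg :: "nat \<Rightarrow> nat \<Rightarrow> nat" where "dg n x = (if x < n then x else x - n)"

locale half_q =
  fixes n :: nat and op sol :: "nat \<Rightarrow> nat \<Rightarrow> nat"
  assumes n1: "n \<ge> 1"
    and opQ: "x < 2*n \<Longrightarrow> y < 2*n \<Longrightarrow> op x y < 2*n"
    and solQ: "x < 2*n \<Longrightarrow> y < 2*n \<Longrightarrow> sol x y < 2*n"
    and comm: "x < 2*n \<Longrightarrow> y < 2*n \<Longrightarrow> op x y = op y x"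
    and op_sol: "x < 2*n \<Longrightarrow> w < 2*n \<Longrightarrow> op x (sol x w) = w"
    and sol_op: "x < 2*n \<Longrightarrow> y < 2*n \<Longrightarrow> sol x (op x y) = y"
    and diag: "x < 2*n \<Longrightarrow> op x x = dg n x"
begin

lemma dg_lt: "x < 2*n \<Longrightarrow> dg n x < 2*n" unfolding dg_def by auto

lemma sol_eq_self: "x < 2*n \<Longrightarrow> w < 2*n \<Longrightarrow> sol x w = x \<longleftrightarrow> w = dg n x"
  by (metis diag op_sol sol_op)
lemma sol_eq_self': "x < 2*n \<Longrightarrow> w < 2*n \<Longrightarrow> x = sol x w \<longleftrightarrow> w = dg n x"
  using sol_eq_self by metis
lemma op_eq_dg: "x < 2*n \<Longrightarrow> y < 2*n \<Longrightarrow> op x y = dg n x \<longleftrightarrow> y = x"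
  by (metis diag sol_op)
lemma op_eq_dg': "x < 2*n \<Longrightarrow> y < 2*n \<Longrightarrow> dg n x = op x y \<longleftrightarrow> y = x"
  using op_eq_dg by metis
lemma sol_sol: "x < 2*n \<Longrightarrow> y < 2*n \<Longrightarrow> sol (sol y x) x = y"
  by (metis comm op_sol sol_op solQ)

definition tinf :: "nat \<Rightarrow> nat \<Rightarrow> (nat \<times> nat) option" where
  "tinf w j = (if n \<le> w then Some (w - n, nx j) else Some (w + n, pv j))"

definition ts :: "(nat \<times> nat) option \<Rightarrow> (nat \<times> nat) option \<Rightarrow> (nat \<times> nat) option" where
  "ts a b = (case a of None \<Rightarrow> (case b of None \<Rightarrow> None | Some (w,j) \<Rightarrow> tinf w j)
     | Some (x,i) \<Rightarrow> (case b of None \<Rightarrow> tinf x i | Some (y,j) \<Rightarrow>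
        if i = j then Some (op x y, nx i)
        else if j = nx i then (if y = dg n x then (if x < n then Some (x, pv i) else None) else Some (sol x y, i))
        else (if x = dg n y then (if y < n then Some (y, pv j) else None) else Some (sol y x, j))))"

definition PS where "PS = insert None (Some ` ({..<2*n} \<times> {0::nat,1,2}))"

lemma dg_small [simp]: "x < n \<Longrightarrow> dg n x = x" unfolding dg_def by simp
lemma dg_big [simp]: "n \<le> x \<Longrightarrow> dg n x = x - n" unfolding dg_def by simp

lemma ts_SS: "ts (Some (x,i)) (Some (y,j)) =
        (if i = j then Some (op x y, nx i)
        else if j = nx i then (if y = dg n x then (if x < n then Some (x, pv i) else None) else Some (sol x y, i))
        else (if x = dg n y then (if y < n then Some (y, pv j) else None) else Some (sol y x, j)))"
  unfolding ts_def by simp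
lemma ts_NS: "ts None (Some (w,j)) = tinf w j" unfolding ts_def by simp
lemma ts_SN: "ts (Some (w,j)) None = tinf w j" unfolding ts_def by simp

lemma dg_sol: "x < 2*n \<Longrightarrow> y < 2*n \<Longrightarrow> x \<noteq> dg n y \<Longrightarrow> x \<noteq> dg n (sol y x)"
  by (metis comm diag op_sol sol_op solQ)

lemmas qsimps = opQ solQ op_sol sol_op sol_eq_self sol_eq_self' op_eq_dg op_eq_dg' sol_sol diag

lemma tinv_SS:
  assumes x: "x < 2*n" and y: "y < 2*n" and i: "i \<in> {0::nat,1,2}" and j: "j \<in> {0::nat,1,2}" and ne: "(x,i) \<noteq> (y,j)"
  shows "ts (Some (x,i)) (ts (Some (x,i)) (Some (y,j))) = Some (y,j)"
proof (cases "i = j")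
  case True
  thus ?thesis using i x y ne by (auto simp: ts_SS nx_def qsimps)
next
  case False
  show ?thesis
  proof (cases "j = nx i")
    case jn: True
    show ?thesis
    proof (cases "y = dg n x")
      case True
      show ?thesis
      proof (cases "x < n")
        case True thus ?thesis using `y = dg n x` jn i j x y by (auto simp: ts_SS nx_def pv_def)
      next
        case False thus ?thesis using `y = dg n x` jn i j x y by (auto simp: ts_SS ts_SN tinf_def nx_def pv_def)
      qed
    next
      case False
      thus ?thesis using jn i j x y `i \<noteq> j` by (auto simp: ts_SS nx_def qsimps)
    qed
  next
    case jn: False
    hence inx: "i = nx j" using i j False unfolding nx_def by auto
    show ?thesis
    proof (cases "x = dg n y")
      case True
      show ?thesis
      proof (cases "y < n")
        case True thus ?thesis using `x = dg n y` inx i j x y by (auto simp: ts_SS nx_def pv_def)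
      next
        case False thus ?thesis using `x = dg n y` inx i j x y by (auto simp: ts_SS ts_SN tinf_def nx_def pv_def)
      qed
    next
      case False
      have z: "sol y x < 2*n" using x y solQ by auto
      have zz: "x \<noteq> dg n (sol y x)" using dg_sol False x y by blast
      show ?thesis using False inx i j x y z zz `i \<noteq> j` by (auto simp: ts_SS nx_def qsimps simp del: dg_small dg_big)
    qed
  qed
qed


lemma SS_props:
  assumes x: "x < 2*n" and y: "y < 2*n" and i: "i \<in> {0::nat,1,2}" and j: "j \<in> {0::nat,1,2}" and ne: "(x,i) \<noteq> (y,j)"
  shows "ts (Some (x,i)) (Some (y,j)) \<in> PS" "ts (Some (x,i)) (Some (y,j)) \<noteq> Some (x,i)"
    "ts (Some (x,i)) (Some (y,j)) = ts (Some (y,j)) (Some (x,i))"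
proof -
  show "ts (Some (x,i)) (Some (y,j)) \<in> PS"
    using x y i j n1 by (auto simp: ts_SS PS_def nx_def pv_def opQ solQ)
  show "ts (Some (x,i)) (Some (y,j)) \<noteq> Some (x,i)"
    using x y i j ne by (auto simp: ts_SS nx_def pv_def qsimps simp del: dg_small dg_big)
  show "ts (Some (x,i)) (Some (y,j)) = ts (Some (y,j)) (Some (x,i))"
    using x y i j ne by (auto simp: ts_SS nx_def pv_def comm)
qed

lemma tinf_PS: "w < 2*n \<Longrightarrow> j \<in> {0::nat,1,2} \<Longrightarrow> tinf w j \<in> PS"
  unfolding tinf_def PS_def nx_def pv_def by auto

lemma tinf_ne: "tinf w j \<noteq> None" unfolding tinf_def by auto

lemma N_inv: "w < 2*n \<Longrightarrow> j \<in> {0::nat,1,2} \<Longrightarrow> ts None (ts None (Some (w,j))) = Some (w,j)"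
  unfolding ts_NS by (auto simp: tinf_def ts_NS nx_def pv_def)

lemma S_inv: "w < 2*n \<Longrightarrow> j \<in> {0::nat,1,2} \<Longrightarrow> ts (Some (w,j)) (ts (Some (w,j)) None) = None"
  unfolding ts_SN by (auto simp: tinf_def ts_SS nx_def pv_def)

lemma tinf_ne2: "w < 2*n \<Longrightarrow> tinf w j \<noteq> Some (w,j)"
  unfolding tinf_def using n1 by auto

lemma steiner_skolem: "steiner PS ts"
proof
  show "finite PS" unfolding PS_def by simp
next
  fix a b assume a: "a \<in> PS" and b: "b \<in> PS" and ne: "a \<noteq> b"
  have cases: "(a = None \<and> (\<exists>w j. b = Some (w,j) \<and> w < 2*n \<and> j \<in> {0::nat,1,2})) \<or>
     (b = None \<and> (\<exists>w j. a = Some (w,j) \<and> w < 2*n \<and> j \<in> {0::nat,1,2})) \<or>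
     (\<exists>x i y j. a = Some (x,i) \<and> b = Some (y,j) \<and> x < 2*n \<and> y < 2*n \<and> i \<in> {0::nat,1,2} \<and> j \<in> {0::nat,1,2} \<and> (x,i) \<noteq> (y,j))"
    using a b ne unfolding PS_def by auto
  show "ts a b \<in> PS" using cases
    by (elim disjE exE conjE) (auto simp: ts_NS ts_SN tinf_PS SS_props)
  show "ts a b \<noteq> a" using cases
    by (elim disjE exE conjE) (auto simp: ts_NS ts_SN tinf_ne tinf_ne2 SS_props)
  show "ts a b = ts b a" using cases
    by (elim disjE exE conjE) (auto simp: ts_NS ts_SN SS_props)
  show "ts a (ts a b) = b" using cases
    by (elim disjE exE conjE) (auto simp: N_inv S_inv tinv_SS)
qed

lemma card_PS: "card PS = 6 * n + 1"
proof -
  have "card (Some ` ({..<2*n} \<times> {0::nat,1,2})) = 2 * n * 3"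
    by (subst card_image) (auto simp: card_cartesian_product)
  thus ?thesis unfolding PS_def by simp
qed

end


definition hS :: "nat \<Rightarrow> nat \<Rightarrow> nat" where "hS n s = (if even s then s div 2 else n + s div 2)"
definition hinv :: "nat \<Rightarrow> nat \<Rightarrow> nat" where "hinv n w = (if w < n then 2 * w else 2 * (w - n) + 1)"
definition opS where "opS n x y = hS n (addm (2*n) x y)"
definition solS where "solS n x w = subm (2*n) (hinv n w) x"

lemma hS_lt: "s < 2*n \<Longrightarrow> hS n s < 2*n" unfolding hS_def by (auto elim!: evenE oddE)
lemma hinv_lt: "w < 2*n \<Longrightarrow> hinv n w < 2*n" unfolding hinv_def by auto
lemma hS_hinv: "w < 2*n \<Longrightarrow> hS n (hinv n w) = w" unfolding hS_def hinv_def by auto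
lemma hinv_hS: "s < 2*n \<Longrightarrow> hinv n (hS n s) = s" unfolding hS_def hinv_def by (auto elim!: evenE oddE)
lemma addm_lt: "x < m \<Longrightarrow> y < m \<Longrightarrow> addm m x y < (m::nat)" unfolding addm_def by auto
lemma subm_lt: "x < m \<Longrightarrow> y < m \<Longrightarrow> subm m x y < (m::nat)" unfolding subm_def by auto
lemma addm_subm: "v < m \<Longrightarrow> x < m \<Longrightarrow> addm m x (subm m v x) = (v::nat)" unfolding addm_def subm_def by auto
lemma subm_addm: "x < m \<Longrightarrow> y < m \<Longrightarrow> subm m (addm m x y) x = (y::nat)" unfolding addm_def subm_def by auto
lemma addm_comm: "addm m x y = addm m y x" unfolding addm_def by (simp add: add.commute)

lemma skolem_q: assumes "n \<ge> 1" shows "half_q n (opS n) (solS n)"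
proof
  show "n \<ge> 1" by fact
  fix x y assume x: "x < 2*n" and y: "y < 2*n"
  show "opS n x y < 2*n" unfolding opS_def using x y by (intro hS_lt addm_lt)
  show "solS n x y < 2*n" unfolding solS_def using x y by (intro subm_lt hinv_lt)
  show "opS n x y = opS n y x" unfolding opS_def by (simp add: addm_comm)
  show "opS n x (solS n x y) = y" unfolding opS_def solS_def using x y
    by (simp add: addm_subm hinv_lt hS_hinv)
  show "solS n x (opS n x y) = y" unfolding opS_def solS_def using x y
    by (simp add: addm_lt hinv_hS subm_addm)
next
  fix x assume x: "x < 2*n"
  show "opS n x x = dg n x" unfolding opS_def hS_def addm_def dg_def using x by auto
qed




lemma sum_if_filter: "finite A \<Longrightarrow> (\<Sum>x\<in>A. if P x then f x else 0) = (\<Sum>x\<in>{x\<in>A. P x}. f x)"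
  by (simp add: sum.inter_filter)

declare if_cong [cong]
declare sum.lessThan_Suc [simp del]

context steiner
begin

definition rr where "rr = (card S - 1) div 2"
definition KK where "KK = Suc rr"
definition ix where "ix p = (SOME f. bij_betw f (Bp p) {0..<rr})"
definition gg where "gg = (SOME g. bij_betw g S {0..<card S})"

definition s2 :: complex where "s2 = complex_of_real (sqrt 2)"
definition s32 :: complex where "s32 = complex_of_real (sqrt (3/2))"

definition XX where "XX = Inl ` Bl \<union> Inr ` insert None (Some ` S)"
definition YY where "YY = Inl ` (S \<times> {..<KK}) \<union> Inr ` {..<card S + 1}"

definition psi :: "('a \<times> nat) + nat \<Rightarrow> 'a set + 'a option \<Rightarrow> complex" where
  "psi y x = (case y of
     Inl pj \<Rightarrow> (case x of
        Inl B \<Rightarrow> (if fst pj \<in> B then F KK (Suc (ix (fst pj) B)) (snd pj) else 0)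
      | Inr None \<Rightarrow> 0
      | Inr (Some q) \<Rightarrow> (if q = fst pj then s2 else 0))
   | Inr k \<Rightarrow> (case x of
        Inl B \<Rightarrow> 0
      | Inr None \<Rightarrow> s32 * F (card S + 1) (card S) k
      | Inr (Some q) \<Rightarrow> F (card S + 1) (gg q) k / s2))"

lemma psi_simps [simp]:
  "psi (Inl (p,j)) (Inl B) = (if p \<in> B then F KK (Suc (ix p B)) j else 0)"
  "psi (Inl (p,j)) (Inr None) = 0"
  "psi (Inl (p,j)) (Inr (Some q)) = (if q = p then s2 else 0)"
  "psi (Inr k) (Inl B) = 0"
  "psi (Inr k) (Inr None) = s32 * F (card S + 1) (card S) k"
  "psi (Inr k) (Inr (Some q)) = F (card S + 1) (gg q) k / s2"
  by (simp_all add: psi_def)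

lemma s2_sq [simp]: "s2 * cnj s2 = 2"
  by (simp add: s2_def flip: of_real_mult)
lemma s32_sq [simp]: "s32 * cnj s32 = 3/2"
  by (simp add: s32_def flip: of_real_mult)
lemma s2_sq' [simp]: "s2 * s2 = 2"
  by (simp add: s2_def flip: of_real_mult)
lemma s32_sq' [simp]: "s32 * s32 = 3/2"
  by (simp add: s32_def flip: of_real_mult)
lemma div_s2: "a / s2 * cnj (b / s2) = a * cnj b / 2"
  by (simp add: s2_def flip: of_real_mult)
lemma s2_nz [simp]: "s2 \<noteq> 0" by (simp add: s2_def)
lemma s32_nz [simp]: "s32 \<noteq> 0" by (simp add: s32_def)

lemma sumX: "(\<Sum>x\<in>XX. f x) = (\<Sum>B\<in>Bl. f (Inl B)) + (\<Sum>q\<in>S. f (Inr (Some q))) + f (Inr None)"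
proof -
  have fin: "finite (Inl ` Bl :: ('a set + 'a option) set)" "finite (Inr ` insert None (Some ` S) :: ('a set + 'a option) set)"
    using finBl finS by auto
  have "(\<Sum>x\<in>XX. f x) = (\<Sum>x\<in>Inl ` Bl. f x) + (\<Sum>x\<in>Inr ` insert None (Some ` S). f x)"
    unfolding XX_def by (rule sum.union_disjoint[OF fin]) auto
  also have "(\<Sum>x\<in>Inl ` Bl. f x) = (\<Sum>B\<in>Bl. f (Inl B))" by (simp add: sum.reindex)
  also have "(\<Sum>x\<in>Inr ` insert None (Some ` S). f x) = (\<Sum>z\<in>insert None (Some ` S). f (Inr z))"
    by (subst sum.reindex) (auto simp: inj_on_def)
  also have "\<dots> = f (Inr None) + (\<Sum>z\<in>Some ` S. f (Inr z))" using finS by (simp)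
  also have "(\<Sum>z\<in>Some ` S. f (Inr z)) = (\<Sum>q\<in>S. f (Inr (Some q)))" by (simp add: sum.reindex)
  finally show ?thesis by (simp add: add_ac)
qed

lemma sumY: "(\<Sum>y\<in>YY. f y) = (\<Sum>p\<in>S. \<Sum>j<KK. f (Inl (p,j))) + (\<Sum>k<card S + 1. f (Inr k))"
proof -
  have fin: "finite (Inl ` (S \<times> {..<KK}) :: (('a \<times> nat) + nat) set)" "finite (Inr ` {..<card S + 1} :: (('a \<times> nat) + nat) set)"
    using finS by auto
  have "(\<Sum>y\<in>YY. f y) = (\<Sum>y\<in>Inl ` (S \<times> {..<KK}). f y) + (\<Sum>y\<in>Inr ` {..<card S + 1}. f y)"
    unfolding YY_def by (rule sum.union_disjoint[OF fin]) auto
  also have "(\<Sum>y\<in>Inl ` (S \<times> {..<KK}). f y) = (\<Sum>z\<in>S \<times> {..<KK}. f (Inl z))" by (simp add: sum.reindex)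
  also have "\<dots> = (\<Sum>p\<in>S. \<Sum>j<KK. f (Inl (p,j)))" by (simp add: sum.cartesian_product split_def)
  also have "(\<Sum>y\<in>Inr ` {..<card S + 1}. f y) = (\<Sum>k<card S + 1. f (Inr k))" by (simp add: sum.reindex)
  finally show ?thesis .
qed

lemma cardX: "card XX = card Bl + card S + 1"
proof -
  have "card XX = card (Inl ` Bl :: ('a set + 'a option) set) + card (Inr ` insert None (Some ` S) :: ('a set + 'a option) set)"
    unfolding XX_def using finBl finS by (intro card_Un_disjoint) auto
  also have "\<dots> = card Bl + card (insert None (Some ` S))"
    by (subst card_image, simp add: inj_on_def)+ simp
  also have "card (insert None (Some ` S)) = card S + 1" using finS by (simp add: card_image)
  finally show ?thesis by simp
qed

lemma cardY: "card YY = card S * KK + card S + 1"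
proof -
  have "card YY = card (Inl ` (S \<times> {..<KK}) :: (('a \<times> nat) + nat) set) + card (Inr ` {..<card S + 1} :: (('a \<times> nat) + nat) set)"
    unfolding YY_def using finS by (intro card_Un_disjoint) auto
  also have "\<dots> = card S * KK + (card S + 1)" by (simp add: card_image card_cartesian_product)
  finally show ?thesis by simp
qed


lemma ifmult [simp]: "(if P then a else 0) * cnj (if Q then b else (0::complex)) = (if P \<and> Q then a * cnj b else 0)"
  by auto

lemma sum_if_const: "(\<Sum>j\<in>A. if P then f j else 0) = (if P then (\<Sum>j\<in>A. f j) else 0)"
  by (cases P) simp_all

lemma cnj_s2 [simp]: "cnj s2 = s2" by (simp add: s2_def)
lemma cnj_s32 [simp]: "cnj s32 = s32" by (simp add: s32_def)

lemma Bp_rr: "p \<in> S \<Longrightarrow> card (Bp p) = rr"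
  using Bp_card[of p] unfolding rr_def by simp

lemma v_odd: assumes "card S \<ge> 3" shows "card S = 2 * rr + 1"
proof -
  obtain p where "p \<in> S" using assms by fastforce
  thus ?thesis using Bp_card[of p] Bp_rr[of p] assms by simp
qed

lemma finBp: "finite (Bp p)" using finBl unfolding Bp_def by simp

lemma ix_bij: assumes "p \<in> S" shows "bij_betw (ix p) (Bp p) {0..<rr}"
proof -
  have "\<exists>f. bij_betw f (Bp p) {0..<rr}"
    using ex_bij_betw_finite_nat[OF finBp[of p]] Bp_rr[OF assms] by simp
  thus ?thesis unfolding ix_def by (rule someI_ex)
qed

lemma gg_bij: "bij_betw gg S {0..<card S}"
proof -
  have "\<exists>f. bij_betw f S {0..<card S}" using ex_bij_betw_finite_nat[OF finS] by simp
  thus ?thesis unfolding gg_def by (rule someI_ex)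
qed

lemma ix_lt: "p \<in> S \<Longrightarrow> B \<in> Bp p \<Longrightarrow> ix p B < rr"
  using ix_bij[of p] by (auto simp: bij_betw_def)

lemma ix_inj: "p \<in> S \<Longrightarrow> B \<in> Bp p \<Longrightarrow> B' \<in> Bp p \<Longrightarrow> ix p B = ix p B' \<longleftrightarrow> B = B'"
  using ix_bij[of p] by (auto simp: bij_betw_def inj_on_def)

lemma gg_lt: "q \<in> S \<Longrightarrow> gg q < card S"
  using gg_bij by (auto simp: bij_betw_def)

lemma gg_inj: "q \<in> S \<Longrightarrow> q' \<in> S \<Longrightarrow> gg q = gg q' \<longleftrightarrow> q = q'"
  using gg_bij by (auto simp: bij_betw_def inj_on_def)

lemma rowsum:
  assumes "p \<in> S" "j < KK" "j' < KK"
  shows "(\<Sum>B\<in>Bp p. F KK (Suc (ix p B)) j * cnj (F KK (Suc (ix p B)) j')) = (if j = j' then of_nat KK else 0) - 1"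
proof -
  have "(\<Sum>B\<in>Bp p. F KK (Suc (ix p B)) j * cnj (F KK (Suc (ix p B)) j')) = (\<Sum>a\<in>{0..<rr}. F KK (Suc a) j * cnj (F KK (Suc a) j'))"
    by (rule sum.reindex_bij_betw[OF ix_bij[OF assms(1)]])
  also have "\<dots> = (\<Sum>a<KK. F KK a j * cnj (F KK a j')) - 1"
  proof -
    have "(\<Sum>a<KK. F KK a j * cnj (F KK a j')) = 1 + (\<Sum>a<rr. F KK (Suc a) j * cnj (F KK (Suc a) j'))"
      unfolding KK_def by (subst sum.lessThan_Suc_shift) simp
    thus ?thesis by (simp add: lessThan_atLeast0)
  qed
  also have "(\<Sum>a<KK. F KK a j * cnj (F KK a j')) = (\<Sum>a<KK. F KK j a * cnj (F KK j' a))"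
    by (simp add: F_sym)
  also have "\<dots> = (if j = j' then of_nat KK else 0)"
    using assms by (intro F_orth) (auto simp: KK_def)
  finally show ?thesis .
qed

lemma if0_mult [simp]: "(if P then a else 0) * b = (if P then a * b else (0::complex))"
  by auto
lemma mult_if0 [simp]: "b * (if P then a else 0) = (if P then b * a else (0::complex))"
  by auto
lemma cnj_if0 [simp]: "cnj (if P then a else 0) = (if P then cnj a else 0)"
  by auto
lemma div_if0 [simp]: "(if P then a else 0) / b = (if P then a / b else (0::complex))"
  by auto
lemma sum_delta_conj [simp]:
  "finite A \<Longrightarrow> (\<Sum>p\<in>A. if P p \<and> q = p then f p else 0) = (if q \<in> A \<and> P q then f q else (0::complex))"
proof -
  assume "finite A"
  have "(\<Sum>p\<in>A. if P p \<and> q = p then f p else 0) = (\<Sum>p\<in>A. if q = p then (if P p then f p else 0) else 0)"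
    by (rule sum.cong) auto
  also have "\<dots> = (if q \<in> A \<and> P q then f q else 0)" using \<open>finite A\<close> by (subst sum.delta') auto
  finally show ?thesis .
qed
lemma sum_delta_conj2 [simp]:
  "finite A \<Longrightarrow> (\<Sum>p\<in>A. if p = q \<and> P p then f p else 0) = (if q \<in> A \<and> P q then f q else (0::complex))"
proof -
  assume "finite A"
  have "(\<Sum>p\<in>A. if p = q \<and> P p then f p else 0) = (\<Sum>p\<in>A. if p = q then (if P p then f p else 0) else 0)"
    by (rule sum.cong) auto
  also have "\<dots> = (if q \<in> A \<and> P q then f q else 0)" using \<open>finite A\<close> by (subst sum.delta) auto
  finally show ?thesis .
qed

lemma sum_delta_conj3 [simp]:
  "finite A \<Longrightarrow> (\<Sum>p\<in>A. if q = p \<and> P p then f p else 0) = (if q \<in> A \<and> P q then f q else (0::complex))"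
  using sum_delta_conj[of A P q f] by (simp add: conj_commute)
lemma sum_delta_conj4 [simp]:
  "finite A \<Longrightarrow> (\<Sum>p\<in>A. if P p \<and> p = q then f p else 0) = (if q \<in> A \<and> P q then f q else (0::complex))"
  using sum_delta_conj2[of A q P f] by (simp add: conj_commute)

lemma if_if_zero [simp]: "(if P then (if Q then a else 0) else 0) = (if P \<and> Q then a else (0::complex))"
  by auto

lemma IP1:
  assumes "p \<in> S" "q \<in> S"
  shows "(\<Sum>x\<in>XX. psi (Inl (p,j)) x * cnj (psi (Inl (q,j')) x)) =
     (\<Sum>B\<in>{B\<in>Bl. p \<in> B \<and> q \<in> B}. F KK (Suc (ix p B)) j * cnj (F KK (Suc (ix q B)) j')) + (if p = q then 2 else 0)"
  unfolding sumX using assms finBl finS by (simp add: sum_if_filter sum.delta conj_ac)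

lemma IP2:
  assumes "p \<in> S"
  shows "(\<Sum>x\<in>XX. psi (Inl (p,j)) x * cnj (psi (Inr k) x)) = cnj (F (card S + 1) (gg p) k)"
  unfolding sumX using assms finS by (simp add: sum.delta)

lemma IP3:
  assumes "p \<in> S"
  shows "(\<Sum>x\<in>XX. psi (Inr k) x * cnj (psi (Inl (p,j)) x)) = F (card S + 1) (gg p) k"
  unfolding sumX using assms finS by (simp add: sum.delta)

lemma IP4:
  assumes "k < card S + 1" "k' < card S + 1"
  shows "(\<Sum>x\<in>XX. psi (Inr k) x * cnj (psi (Inr k') x)) =
     (if k = k' then of_nat (card S + 1) / 2 else 0) + F (card S + 1) (card S) k * cnj (F (card S + 1) (card S) k')"
proof -
  let ?n = "card S + 1"
  have e1: "(\<Sum>q\<in>S. F ?n (gg q) k / s2 * cnj (F ?n (gg q) k' / s2)) = (\<Sum>q\<in>S. F ?n (gg q) k * cnj (F ?n (gg q) k')) / 2"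
    unfolding div_s2 by (rule sum_divide_distrib[symmetric])
  have e2: "(\<Sum>q\<in>S. F ?n (gg q) k * cnj (F ?n (gg q) k')) = (\<Sum>a\<in>{0..<card S}. F ?n a k * cnj (F ?n a k'))"
    by (rule sum.reindex_bij_betw[OF gg_bij])
  have e3: "(\<Sum>a<?n. F ?n a k * cnj (F ?n a k')) = (\<Sum>a\<in>{0..<card S}. F ?n a k * cnj (F ?n a k')) + F ?n (card S) k * cnj (F ?n (card S) k')"
    by (simp add: lessThan_atLeast0 sum.lessThan_Suc)
  have e4: "(\<Sum>a<?n. F ?n a k * cnj (F ?n a k')) = (if k = k' then of_nat ?n else 0)"
    using F_orth[of ?n k k'] assms by (simp add: F_sym)
  have "(\<Sum>x\<in>XX. psi (Inr k) x * cnj (psi (Inr k') x)) =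
     (\<Sum>q\<in>S. F ?n (gg q) k / s2 * cnj (F ?n (gg q) k' / s2)) + s32 * F ?n (card S) k * cnj (s32 * F ?n (card S) k')"
    unfolding sumX by simp
  also have "s32 * F ?n (card S) k * cnj (s32 * F ?n (card S) k') = 3/2 * (F ?n (card S) k * cnj (F ?n (card S) k'))"
    by (simp add: s32_def algebra_simps flip: of_real_mult)
  finally have L: "(\<Sum>x\<in>XX. psi (Inr k) x * cnj (psi (Inr k') x)) =
     (\<Sum>a\<in>{0..<card S}. F ?n a k * cnj (F ?n a k')) / 2 + 3/2 * (F ?n (card S) k * cnj (F ?n (card S) k'))"
    unfolding e1 e2 .
  have e5: "(\<Sum>a\<in>{0..<card S}. F ?n a k * cnj (F ?n a k')) = (if k = k' then of_nat ?n else 0) - F ?n (card S) k * cnj (F ?n (card S) k')"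
  proof -
    have "(\<Sum>a\<in>{0..<card S}. F ?n a k * cnj (F ?n a k')) + F ?n (card S) k * cnj (F ?n (card S) k') = (if k = k' then of_nat ?n else 0)"
      by (simp only: e3[symmetric] e4)
    thus ?thesis by (simp only: eq_diff_eq)
  qed
  have gen: "(a - G) / 2 + 3/2 * G = a / 2 + G" for a G :: complex by (simp add: field_simps)
  show ?thesis unfolding L e5 gen by (cases "k = k'") simp_all
qed


end

context steiner begin
lemma norm_F_prod [simp]: "norm (F n a b * cnj (F m c d)) = 1"
  by (simp add: norm_mult)

lemma XX_cases: "x \<in> XX \<Longrightarrow> (\<exists>B\<in>Bl. x = Inl B) \<or> x = Inr None \<or> (\<exists>q\<in>S. x = Inr (Some q))"
  unfolding XX_def by auto

lemma YY_cases: "y \<in> YY \<Longrightarrow> (\<exists>p\<in>S. \<exists>j<KK. y = Inl (p,j)) \<or> (\<exists>k<card S + 1. y = Inr k)"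
  unfolding YY_def by auto

lemma blockF_zero: "a < KK \<Longrightarrow> a \<noteq> 0 \<Longrightarrow> (\<Sum>j<KK. F KK a j) = 0"
  using F_orth[of KK a 0] by (simp add: KK_def)

lemma FR_BB:
  assumes "B \<in> Bl" "B' \<in> Bl"
  shows "(\<Sum>y\<in>YY. psi y (Inl B) * cnj (psi y (Inl B'))) = (if B = B' then 3 * of_nat KK else 0)"
proof -
  have "(\<Sum>y\<in>YY. psi y (Inl B) * cnj (psi y (Inl B'))) =
        (\<Sum>p\<in>S. if p \<in> B \<and> p \<in> B' then (\<Sum>j<KK. F KK (Suc (ix p B)) j * cnj (F KK (Suc (ix p B')) j)) else 0)"
    unfolding sumY by (simp add: sum_if_const conj_ac)
  also have "\<dots> = (\<Sum>p\<in>S. if p \<in> B \<and> B = B' then of_nat KK else 0)"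
  proof (rule sum.cong)
    fix p assume p: "p \<in> S"
    show "(if p \<in> B \<and> p \<in> B' then (\<Sum>j<KK. F KK (Suc (ix p B)) j * cnj (F KK (Suc (ix p B')) j)) else 0) =
          (if p \<in> B \<and> B = B' then of_nat KK else 0)"
    proof (cases "p \<in> B \<and> p \<in> B'")
      case True
      hence "B \<in> Bp p" "B' \<in> Bp p" using assms by (auto simp: Bp_def)
      hence "ix p B < rr" "ix p B' < rr" "ix p B = ix p B' \<longleftrightarrow> B = B'" using p ix_lt ix_inj by auto
      thus ?thesis using True F_orth[of KK "Suc (ix p B)" "Suc (ix p B')"] by (auto simp: KK_def)
    qed auto
  qed simp
  also have "\<dots> = (if B = B' then 3 * of_nat KK else 0)"
  proof (cases "B = B'")
    case True
    have "{p \<in> S. p \<in> B} = B" using Bl_sub[OF assms(1)] by auto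
    thus ?thesis using True finS Bl_card[OF assms(1)] by (simp add: sum_if_filter)
  qed simp
  finally show ?thesis .
qed

lemma FR_BQ:
  assumes "B \<in> Bl" "q \<in> S"
  shows "(\<Sum>y\<in>YY. psi y (Inl B) * cnj (psi y (Inr (Some q)))) = 0"
    and "(\<Sum>y\<in>YY. psi y (Inr (Some q)) * cnj (psi y (Inl B))) = 0"
proof -
  have "B \<in> Bp q \<Longrightarrow> (\<Sum>j<KK. F KK (Suc (ix q B)) j) = 0"
    using assms ix_lt[of q B] by (intro blockF_zero) (auto simp: KK_def)
  hence z: "q \<in> B \<Longrightarrow> (\<Sum>j<KK. F KK (Suc (ix q B)) j) = 0" using assms by (auto simp: Bp_def)
  hence z': "q \<in> B \<Longrightarrow> (\<Sum>j<KK. cnj (F KK (Suc (ix q B)) j)) = 0"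
    by (metis cnj_sum complex_cnj_zero)
  show "(\<Sum>y\<in>YY. psi y (Inl B) * cnj (psi y (Inr (Some q)))) = 0"
    unfolding sumY using finS z by (simp add: sum_if_const sum.delta flip: sum_distrib_right)
  show "(\<Sum>y\<in>YY. psi y (Inr (Some q)) * cnj (psi y (Inl B))) = 0"
    unfolding sumY using finS z' by (simp add: sum_if_const sum.delta flip: sum_distrib_left)
qed

lemma FR_BN:
  shows "(\<Sum>y\<in>YY. psi y (Inl B) * cnj (psi y (Inr None))) = 0"
    and "(\<Sum>y\<in>YY. psi y (Inr None) * cnj (psi y (Inl B))) = 0"
  unfolding sumY by simp_all

lemma FR_QQ:
  assumes "q \<in> S" "q' \<in> S" "card S \<ge> 3"
  shows "(\<Sum>y\<in>YY. psi y (Inr (Some q)) * cnj (psi y (Inr (Some q')))) = (if q = q' then 3 * of_nat KK else 0)"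
proof -
  let ?n = "card S + 1"
  have "(\<Sum>k<?n. F ?n (gg q) k / s2 * cnj (F ?n (gg q') k / s2)) = (\<Sum>k<?n. F ?n (gg q) k * cnj (F ?n (gg q') k)) / 2"
    unfolding div_s2 by (rule sum_divide_distrib[symmetric])
  also have "\<dots> = (if q = q' then of_nat ?n / 2 else 0)"
  proof -
    have "(\<Sum>k<?n. F ?n (gg q) k * cnj (F ?n (gg q') k)) = (if gg q = gg q' then of_nat ?n else 0)"
      by (rule F_orth) (use assms gg_lt in \<open>auto intro: less_SucI\<close>)
    also have "\<dots> = (if q = q' then of_nat ?n else 0)" using assms gg_inj by auto
    finally show ?thesis by simp
  qed
  finally have e: "(\<Sum>k<?n. F ?n (gg q) k / s2 * cnj (F ?n (gg q') k / s2)) = (if q = q' then of_nat ?n / 2 else 0)" .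
  have n: "of_nat ?n = (2 * of_nat KK :: complex)" using v_odd[OF assms(3)] by (simp add: KK_def)
  show ?thesis unfolding sumY psi_simps e using finS n assms by (auto simp: sum.delta)
qed

lemma FR_QN:
  assumes "q \<in> S"
  shows "(\<Sum>y\<in>YY. psi y (Inr (Some q)) * cnj (psi y (Inr None))) = 0"
    and "(\<Sum>y\<in>YY. psi y (Inr None) * cnj (psi y (Inr (Some q)))) = 0"
proof -
  let ?n = "card S + 1"
  have o: "(\<Sum>k<?n. F ?n (gg q) k * cnj (F ?n (card S) k)) = 0"
    by (subst F_orth) (use assms gg_lt[of q] in auto)
  have o': "(\<Sum>k<?n. F ?n (card S) k * cnj (F ?n (gg q) k)) = 0"
    by (subst F_orth) (use assms gg_lt[of q] in auto)
  have pw1: "F ?n (gg q) k / s2 * cnj (s32 * F ?n (card S) k) = (s32 / s2) * (F ?n (gg q) k * cnj (F ?n (card S) k))" for k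
    by (simp add: field_simps)
  have pw2: "s32 * F ?n (card S) k * cnj (F ?n (gg q) k / s2) = (s32 / s2) * (F ?n (card S) k * cnj (F ?n (gg q) k))" for k
    by (simp add: field_simps)
  have "(\<Sum>y\<in>YY. psi y (Inr (Some q)) * cnj (psi y (Inr None))) = (\<Sum>k<?n. (s32 / s2) * (F ?n (gg q) k * cnj (F ?n (card S) k)))"
    unfolding sumY psi_simps pw1 by simp
  also have "\<dots> = (s32 / s2) * (\<Sum>k<?n. F ?n (gg q) k * cnj (F ?n (card S) k))" by (rule sum_distrib_left[symmetric])
  also have "\<dots> = 0" using o by simp
  finally show "(\<Sum>y\<in>YY. psi y (Inr (Some q)) * cnj (psi y (Inr None))) = 0" .
  have "(\<Sum>y\<in>YY. psi y (Inr None) * cnj (psi y (Inr (Some q)))) = (\<Sum>k<?n. (s32 / s2) * (F ?n (card S) k * cnj (F ?n (gg q) k)))"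
    unfolding sumY psi_simps pw2 by simp
  also have "\<dots> = (s32 / s2) * (\<Sum>k<?n. F ?n (card S) k * cnj (F ?n (gg q) k))" by (rule sum_distrib_left[symmetric])
  also have "\<dots> = 0" using o' by simp
  finally show "(\<Sum>y\<in>YY. psi y (Inr None) * cnj (psi y (Inr (Some q)))) = 0" .
qed

lemma FR_NN:
  assumes "card S \<ge> 3"
  shows "(\<Sum>y\<in>YY. psi y (Inr None) * cnj (psi y (Inr None))) = 3 * of_nat KK"
proof -
  have n: "of_nat (card S + 1) = (2 * of_nat KK :: complex)" using v_odd[OF assms] by (simp add: KK_def)
  have "(\<Sum>y\<in>YY. psi y (Inr None) * cnj (psi y (Inr None))) = (\<Sum>k<card S + 1. (3/2::complex))"
  proof -
    have pw: "s32 * F (card S + 1) (card S) k * cnj (s32 * F (card S + 1) (card S) k) = 3/2" for k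
      by (simp add: algebra_simps flip: mult.assoc)
    show ?thesis unfolding sumY psi_simps pw by simp
  qed
  also have "\<dots> = of_nat (card S + 1) * (3/2)" by simp
  also have "\<dots> = 3 * of_nat KK" unfolding n by simp
  finally show ?thesis .
qed


lemma F_nz [simp]: "F n a b \<noteq> 0"
proof
  assume "F n a b = 0" thus False using F_norm[of n a b] by (simp del: F_norm)
qed

lemma finXX: "finite XX" unfolding XX_def using finBl finS by auto
lemma finYY: "finite YY" unfolding YY_def using finS by auto

lemma Bp_filter: "{B \<in> Bl. p \<in> B \<and> p \<in> B} = Bp p" unfolding Bp_def by auto

lemma steiner_ETF:
  assumes v3: "card S \<ge> 3"
  shows "\<exists>phi. is_ETF (card Bl + card S + 1) (card S * KK + card S + 1) phi"
proof (rule ETF_transfer[OF finXX finYY cardX cardY])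
  show "\<forall>y\<in>YY. \<exists>x\<in>XX. psi y x \<noteq> 0"
  proof
    fix y assume "y \<in> YY"
    then consider (a) p j where "p \<in> S" "y = Inl (p,j)" | (b) k where "y = Inr k"
      using YY_cases by blast
    thus "\<exists>x\<in>XX. psi y x \<noteq> 0"
    proof cases
      case a
      hence "Inr (Some p) \<in> XX" unfolding XX_def by auto
      thus ?thesis using a by force
    next
      case b
      have "Inr None \<in> XX" unfolding XX_def by auto
      thus ?thesis using b by force
    qed
  qed
  show "\<forall>y\<in>YY. (\<Sum>x\<in>XX. psi y x * cnj (psi y x)) = of_nat rr + 2"
  proof
    fix y assume "y \<in> YY"
    then consider (a) p j where "p \<in> S" "y = Inl (p,j)" | (b) k where "k < card S + 1" "y = Inr k"
      using YY_cases by blast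
    thus "(\<Sum>x\<in>XX. psi y x * cnj (psi y x)) = of_nat rr + 2"
    proof cases
      case a
      thus ?thesis using IP1[of p p j j] Bp_rr[of p] by (simp add: Bp_def)
    next
      case b
      have n: "of_nat (card S + 1) = (2 * of_nat rr + 2 :: complex)" using v_odd[OF v3] by simp
      show ?thesis using b IP4[of k k] n by simp
    qed
  qed
  show "\<forall>y\<in>YY. \<forall>y'\<in>YY. y \<noteq> y' \<longrightarrow> cmod (\<Sum>x\<in>XX. psi y x * cnj (psi y' x)) = 1"
  proof (intro ballI impI)
    fix y y' assume y: "y \<in> YY" and y': "y' \<in> YY" and ne: "y \<noteq> y'"
    from y consider (a) p j where "p \<in> S" "j < KK" "y = Inl (p,j)" | (b) k where "k < card S + 1" "y = Inr k"
      using YY_cases by blast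
    thus "cmod (\<Sum>x\<in>XX. psi y x * cnj (psi y' x)) = 1"
    proof cases
      case a
      from y' consider (aa) q j' where "q \<in> S" "j' < KK" "y' = Inl (q,j')" | (ab) k' where "k' < card S + 1" "y' = Inr k'"
        using YY_cases by blast
      thus ?thesis
      proof cases
        case aa
        show ?thesis
        proof (cases "p = q")
          case True
          hence "j \<noteq> j'" using a aa ne by auto
          thus ?thesis using a aa True IP1[of p p j j'] rowsum[of p j j'] by (simp add: Bp_def)
        next
          case False
          thus ?thesis using a aa IP1[of p q j j'] two_blocks[of p q] by simp
        qed
      next
        case ab
        thus ?thesis using a IP2[of p j k'] by simp
      qed
    next
      case b
      from y' consider (ba) q j' where "q \<in> S" "j' < KK" "y' = Inl (q,j')" | (bb) k' where "k' < card S + 1" "y' = Inr k'"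
        using YY_cases by blast
      thus ?thesis
      proof cases
        case ba
        thus ?thesis using b IP3[of q k j'] by simp
      next
        case bb
        hence "k \<noteq> k'" using b ne by auto
        thus ?thesis using b bb IP4[of k k'] by simp
      qed
    qed
  qed
  show "\<forall>x\<in>XX. \<forall>x'\<in>XX. (\<Sum>y\<in>YY. psi y x * cnj (psi y x')) = (if x = x' then 3 * of_nat KK else 0)"
  proof (intro ballI)
    fix x x' assume x: "x \<in> XX" and x': "x' \<in> XX"
    from x consider (a) B where "B \<in> Bl" "x = Inl B" | (b) "x = Inr None" | (c) q where "q \<in> S" "x = Inr (Some q)"
      using XX_cases by blast
    thus "(\<Sum>y\<in>YY. psi y x * cnj (psi y x')) = (if x = x' then 3 * of_nat KK else 0)"
    proof cases
      case a
      from x' consider (a') B' where "B' \<in> Bl" "x' = Inl B'" | (b') "x' = Inr None" | (c') q' where "q' \<in> S" "x' = Inr (Some q')"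
        using XX_cases by blast
      thus ?thesis
      proof cases
        case a' thus ?thesis using a FR_BB[of B B'] by simp
      next
        case b' thus ?thesis using a FR_BN(1)[of B] by simp
      next
        case c' thus ?thesis using a FR_BQ(1)[of B q'] by simp
      qed
    next
      case b
      from x' consider (a') B' where "B' \<in> Bl" "x' = Inl B'" | (b') "x' = Inr None" | (c') q' where "q' \<in> S" "x' = Inr (Some q')"
        using XX_cases by blast
      thus ?thesis
      proof cases
        case a' thus ?thesis using b FR_BN(2)[of B'] by simp
      next
        case b' thus ?thesis using b FR_NN[OF v3] by simp
      next
        case c' thus ?thesis using b FR_QN(2)[of q'] by simp
      qed
    next
      case c
      from x' consider (a') B' where "B' \<in> Bl" "x' = Inl B'" | (b') "x' = Inr None" | (c') q' where "q' \<in> S" "x' = Inr (Some q')"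
        using XX_cases by blast
      thus ?thesis
      proof cases
        case a' thus ?thesis using c FR_BQ(2)[of B' q] by simp
      next
        case b' thus ?thesis using c FR_QN(1)[of q] by simp
      next
        case c' thus ?thesis using c FR_QQ[of q q', OF _ _ v3] by simp
      qed
    qed
  qed
qed

end

lemma steiner_ETF_V:
  assumes "steiner S t" "card S = V" "V \<ge> 3"
  shows "\<exists>phi. is_ETF ((V + 2) * (V + 3) div 6) ((V + 1) * (V + 2) div 2) phi"
proof -
  interpret steiner S t by fact
  obtain phi where phi: "is_ETF (card Bl + card S + 1) (card S * KK + card S + 1) phi"
    using steiner_ETF assms by auto
  have b: "6 * card Bl = V * V - V" using Bl_count assms by simp
  have v: "V = 2 * rr + 1" using v_odd assms by simp
  have M: "(V + 2) * (V + 3) div 6 = card Bl + card S + 1"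
  proof -
    have "(V + 2) * (V + 3) = 6 * card Bl + 6 * (V + 1)" using b v by (simp add: algebra_simps)
    thus ?thesis using assms by simp
  qed
  have N: "(V + 1) * (V + 2) div 2 = card S * KK + card S + 1"
  proof -
    have "(V + 1) * (V + 2) = 2 * (card S * KK + card S + 1)" using v assms by (simp add: KK_def algebra_simps)
    thus ?thesis by simp
  qed
  show ?thesis using phi unfolding M N by blast
qed


theorem corollary3p2:
  fixes V :: nat
  assumes "V \<ge> 3" and "V mod 6 = 1 \<or> V mod 6 = 3"
  shows "\<exists>phi. is_ETF ((V + 2) * (V + 3) div 6) ((V + 1) * (V + 2) div 2) phi"
  using assms(2)
proof
  assume h: "V mod 6 = 1"
  define n where "n = V div 6"
  have V: "V = 6 * n + 1" using h n_def by presburger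
  have n1: "n \<ge> 1" using V assms(1) by simp
  interpret half_q n "opS n" "solS n" using skolem_q[OF n1] .
  have "steiner PS ts" by (rule steiner_skolem)
  moreover have "card PS = V" using card_PS V by simp
  ultimately show ?thesis using steiner_ETF_V assms(1) by blast
next
  assume h: "V mod 6 = 3"
  define n where "n = V div 6"
  have V: "V = 6 * n + 3" using h n_def by presburger
  have m: "odd (2 * n + 1)" by simp
  interpret idem_q "{..<2*n+1}" "opB (2*n+1)" "solB (2*n+1)" using bose_q[OF m] .
  have "steiner ({..<2*n+1} \<times> {0::nat,1,2}) tb" by (rule steiner_bose)
  moreover have "card ({..<2*n+1} \<times> {0::nat,1,2}) = V" using V by (simp add: card_cartesian_product)
  ultimately show ?thesis using steiner_ETF_V assms(1) by blast
qed

end
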